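(* For $\beta=(\beta_1,\beta_2)$, $\beta'=(\beta_1',\beta_2')$ with $\beta_1>\beta_2$, $\beta_1'>\beta_2'$, let $\varphi_\beta:\mathbb{R}^2\to\mathbb{R}^2$, $\varphi_\beta(S_1,S_2)=(\beta_1S_1+\beta_2S_2,\,1-S_1-S_2)$, and $g=g(\beta',\beta):=\varphi_{\beta'}^{-1}\circ\varphi_\beta$. Let $T_{ph}:=\{(S_1,S_2)\in\mathbb{R}_{\ge0}^2: S_1+S_2\le 1\}$. Then $g(T_{ph})\subset T_{ph}$ if and only if $\beta_2'\le\beta_2$ and $\beta_1\le\beta_1'$. *)

theory Defs
  imports "HOL-Analysis.Analysis"
begin

definition phi :: "real \<times> real \<Rightarrow> real \<times> real \<Rightarrow> real \<times> real" where
  "phi \<beta> S = (fst \<beta> * fst S + snd \<beta> * snd S, 1 - fst S - snd S)"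

definition gmap :: "real \<times> real \<Rightarrow> real \<times> real \<Rightarrow> real \<times> real \<Rightarrow> real \<times> real" where
  "gmap \<beta>' \<beta> = inv (phi \<beta>') \<circ> phi \<beta>"

definition T_ph :: "(real \<times> real) set" where
  "T_ph = {S. fst S \<ge> 0 \<and> snd S \<ge> 0 \<and> fst S + snd S \<le> 1}"

end

theory Submission
  imports Defs
begin

lemma phi_inj:
  fixes a b :: real assumes "a > b" shows "inj (phi (a, b))"
proof (rule injI)
  fix x y assume h: "phi (a, b) x = phi (a, b) y"
  obtain x1 x2 where x: "x = (x1, x2)" by force
  obtain y1 y2 where y: "y = (y1, y2)" by force
  from h have e1: "a * x1 + b * x2 = a * y1 + b * y2" and e2: "x1 + x2 = y1 + y2"
    by (auto simp: phi_def x y)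
  from e2 have "x2 = y1 + y2 - x1" by simp
  with e1 have "(a - b) * x1 = (a - b) * y1" by (simp add: algebra_simps)
  with assms have "x1 = y1" by simp
  with e2 show "x = y" using x y by simp
qed

lemma gmap_eq:
  fixes a b a' b' s1 s2 :: real assumes "a' > b'"
  shows "gmap (a', b') (a, b) (s1, s2) =
     (((a - b') * s1 + (b - b') * s2) / (a' - b'), ((a' - a) * s1 + (a' - b) * s2) / (a' - b'))"
proof -
  let ?P = "(((a - b') * s1 + (b - b') * s2) / (a' - b'), ((a' - a) * s1 + (a' - b) * s2) / (a' - b'))"
  have d: "a' - b' \<noteq> 0" using assms by simp
  define A where "A = (a - b') * s1 + (b - b') * s2"
  define B where "B = (a' - a) * s1 + (a' - b) * s2"
  have k1: "a' * A + b' * B = (a' - b') * (a * s1 + b * s2)" unfolding A_def B_def by algebra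
  have k2: "A + B = (a' - b') * (s1 + s2)" unfolding A_def B_def by algebra
  have "a' * (A / (a' - b')) + b' * (B / (a' - b')) = (a' * A + b' * B) / (a' - b')"
    by (simp add: add_divide_distrib)
  also have "\<dots> = a * s1 + b * s2" using k1 d by simp
  finally have q1: "a' * (A / (a' - b')) + b' * (B / (a' - b')) = a * s1 + b * s2" .
  have "A / (a' - b') + B / (a' - b') = (A + B) / (a' - b')" by (simp add: add_divide_distrib)
  also have "\<dots> = s1 + s2" using k2 d by simp
  finally have q2: "A / (a' - b') + B / (a' - b') = s1 + s2" .
  have "phi (a', b') ?P = phi (a, b) (s1, s2)"
    using q1 q2 unfolding A_def[symmetric] B_def[symmetric] phi_def by (simp add: algebra_simps)
  then have "inv (phi (a', b')) (phi (a, b) (s1, s2)) = ?P"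
    using phi_inj[OF assms] by (metis inv_f_f)
  then show ?thesis by (simp add: gmap_def)
qed

theorem lemma3p12:
  fixes \<beta>1 \<beta>2 \<beta>1' \<beta>2' :: real
  assumes "\<beta>1 > \<beta>2" and "\<beta>1' > \<beta>2'"
  shows "gmap (\<beta>1', \<beta>2') (\<beta>1, \<beta>2) ` T_ph \<subseteq> T_ph \<longleftrightarrow> (\<beta>2' \<le> \<beta>2 \<and> \<beta>1 \<le> \<beta>1')"
proof
  assume h: "gmap (\<beta>1', \<beta>2') (\<beta>1, \<beta>2) ` T_ph \<subseteq> T_ph"
  have "(1::real, 0::real) \<in> T_ph" "(0::real, 1::real) \<in> T_ph" by (auto simp: T_ph_def)
  then have "gmap (\<beta>1', \<beta>2') (\<beta>1, \<beta>2) (1, 0) \<in> T_ph"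
     "gmap (\<beta>1', \<beta>2') (\<beta>1, \<beta>2) (0, 1) \<in> T_ph" using h by auto
  then have "(\<beta>1' - \<beta>1) / (\<beta>1' - \<beta>2') \<ge> 0" "(\<beta>2 - \<beta>2') / (\<beta>1' - \<beta>2') \<ge> 0"
    by (auto simp: gmap_eq[OF assms(2)] T_ph_def)
  then show "\<beta>2' \<le> \<beta>2 \<and> \<beta>1 \<le> \<beta>1'" using assms
    by (auto simp: zero_le_divide_iff)
next
  assume c: "\<beta>2' \<le> \<beta>2 \<and> \<beta>1 \<le> \<beta>1'"
  show "gmap (\<beta>1', \<beta>2') (\<beta>1, \<beta>2) ` T_ph \<subseteq> T_ph"
  proof
    fix y assume "y \<in> gmap (\<beta>1', \<beta>2') (\<beta>1, \<beta>2) ` T_ph"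
    then obtain s1 s2 where s: "(s1, s2) \<in> T_ph" and y: "y = gmap (\<beta>1', \<beta>2') (\<beta>1, \<beta>2) (s1, s2)"
      by auto
    from s have s1: "s1 \<ge> 0" "s2 \<ge> 0" "s1 + s2 \<le> 1" by (auto simp: T_ph_def)
    have d: "\<beta>1' - \<beta>2' > 0" using assms by simp
    have n1: "(\<beta>1 - \<beta>2') * s1 + (\<beta>2 - \<beta>2') * s2 \<ge> 0"
      using c assms s1 by (intro add_nonneg_nonneg mult_nonneg_nonneg) auto
    have n2: "(\<beta>1' - \<beta>1) * s1 + (\<beta>1' - \<beta>2) * s2 \<ge> 0"
      using c assms s1 by (intro add_nonneg_nonneg mult_nonneg_nonneg) auto
    have sum: "((\<beta>1 - \<beta>2') * s1 + (\<beta>2 - \<beta>2') * s2) / (\<beta>1' - \<beta>2')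
       + ((\<beta>1' - \<beta>1) * s1 + (\<beta>1' - \<beta>2) * s2) / (\<beta>1' - \<beta>2') = s1 + s2"
    proof -
      have "(\<beta>1 - \<beta>2') * s1 + (\<beta>2 - \<beta>2') * s2 + ((\<beta>1' - \<beta>1) * s1 + (\<beta>1' - \<beta>2) * s2)
          = (\<beta>1' - \<beta>2') * (s1 + s2)" by algebra
      then show ?thesis using d by (simp add: add_divide_distrib[symmetric])
    qed
    show "y \<in> T_ph" unfolding y gmap_eq[OF assms(2)] T_ph_def
      using n1 n2 d sum s1 by auto
  qed
qed

end
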